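(* Let $\Gamma$ be a simply connected closed surface approximated by a triangular mesh with $N$ edges, $N_S$ triangles and $N_L$ vertices, and let $\mathsf{\Sigma}$, $\mathsf{\Lambda}$, $\mathsf{G}$, $\mathsf{G}_p$, $\mathsf{G}_\lambda$, $\mathbb{G}$, $\mathbb{G}_{\tilde p}$, $\mathbb{G}_{\tilde\lambda}$ be as in the context. Define the normalized Loop and Star matrices $\tilde{\mathsf{\Sigma}}=\mathsf{G}^{-1/2}\mathsf{\Sigma}\mathsf{G}_p^{1/2}$, $\tilde{\mathsf{\Lambda}}=\mathsf{G}^{1/2}\mathsf{\Lambda}\mathsf{G}_\lambda^{-1/2}$ and the dually-normalized ones $\tilde{\mathbb{\Sigma}}=\mathbb{G}^{1/2}\mathsf{\Sigma}\mathbb{G}_{\tilde\lambda}^{-1/2}$, $\tilde{\mathbb{\Lambda}}=\mathbb{G}^{-1/2}\mathsf{\Lambda}\mathbb{G}_{\tilde p}^{1/2}$, and the projectors $\tilde{\mathsf{P}}^\Sigma=\tilde{\mathsf{\Sigma}}(\tilde{\mathsf{\Sigma}}^{\mathrm T}\tilde{\mathsf{\Sigma}})^+\tilde{\mathsf{\Sigma}}^{\mathrm T}$, $\tilde{\mathsf{P}}^\Lambda=\tilde{\mathsf{\Lambda}}(\tilde{\mathsf{\Lambda}}^{\mathrm T}\tilde{\mathsf{\Lambda}})^+\tilde{\mathsf{\Lambda}}^{\mathrm T}$, $\tilde{\mathbb{P}}^\Sigma=\tilde{\mathbb{\Sigma}}(\tilde{\mathbb{\Sigma}}^{\mathrm T}\tilde{\mathbb{\Sigma}})^+\tilde{\mathbb{\Sigma}}^{\mathrm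 T}$, $\tilde{\mathbb{P}}^\Lambda=\tilde{\mathbb{\Lambda}}(\tilde{\mathbb{\Lambda}}^{\mathrm T}\tilde{\mathbb{\Lambda}})^+\tilde{\mathbb{\Lambda}}^{\mathrm T}$. Then $$\tilde{\mathsf{P}}^\Lambda+\tilde{\mathsf{P}}^\Sigma=\mathsf{I}\qquad\text{and}\qquad \tilde{\mathbb{P}}^\Lambda+\tilde{\mathbb{P}}^\Sigma=\mathsf{I},$$ where $\mathsf{I}$ is the $N\times N$ identity.
   Context: Each edge $m$ of the mesh is shared by two triangles $c_m^+$, $c_m^-$. The Star-to-RWG matrix $\mathsf{\Sigma}\in\mathbb{R}^{N\times N_S}$ has $[\mathsf{\Sigma}]_{mn}=1$ if cell $n$ is $c_m^+$, $-1$ if cell $n$ is $c_m^-$, $0$ otherwise. The Loop-to-RWG matrix $\mathsf{\Lambda}\in\mathbb{R}^{N\times N_L}$ has $[\mathsf{\Lambda}]_{mn}=\pm1$ when vertex $n$ is an endpoint of edge $m$ (opposite signs for the two endpoints, fixed by the orientation convention of the RWG functions), $0$ otherwise; with this convention $\mathsf{\Sigma}^{\mathrm T}\mathsf{\Lambda}=\mathsf{0}$, and $\mathsf{\Sigma}\vec{s}+\mathsf{\Lambda}\vec{l}$ spans $\mathbb{R}^N$ on a simply connected closed surface (the discrete quasi-Helmholtz decomposition has no harmonic part). Gram matrices (all symmetric positive definite): $[\mathsf{G}]_{mn}=\langle\mathbf{f}_m,\mathbf{f}_n\rangle$ for the RWG basis functions $\mathbf{f}_n$ associated with the edges; $[\mathbb{G}]_{mn}=\langle\mathbf{g}_m,\mathbf{g}_n\rangle$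 for the dual (Buffa–Christiansen) edge functions $\mathbf{g}_n$; $[\mathsf{G}_p]_{mn}=\langle p_m,p_n\rangle$ with $p_m=1/A_m$ on triangle $c_m$ (area $A_m$) and $0$ elsewhere; $[\mathsf{G}_\lambda]_{mn}=\langle\lambda_m,\lambda_n\rangle$ for the piecewise-linear hat (pyramid) functions $\lambda_m$ at the vertices; $\mathbb{G}_{\tilde p}$ and $\mathbb{G}_{\tilde\lambda}$ are the Gram matrices of the dual patch functions (one per vertex) and dual pyramid functions (one per triangle) on the barycentric refinement. $\langle a,b\rangle=\int_\Gamma a\cdot b\,dS$. Matrix square roots are the symmetric positive definite ones; $^+$ is the Moore–Penrose pseudo-inverse. *)

theory Defs
  imports "HOL-Analysis.Analysis"
begin

definition sym_mat :: "real^'n^'n \<Rightarrow> bool" where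
  "sym_mat A \<longleftrightarrow> transpose A = A"

definition spd :: "real^'n^'n \<Rightarrow> bool" where
  "spd A \<longleftrightarrow> sym_mat A \<and> (\<forall>x. x \<noteq> 0 \<longrightarrow> x \<bullet> (A *v x) > 0)"

definition mat_sqrt :: "real^'n^'n \<Rightarrow> real^'n^'n" where
  "mat_sqrt A = (THE S. spd S \<and> S ** S = A)"

definition mat_inv_sqrt :: "real^'n^'n \<Rightarrow> real^'n^'n" where
  "mat_inv_sqrt A = matrix_inv (mat_sqrt A)"

definition pinv :: "real^'n^'m \<Rightarrow> real^'m^'n" where
  "pinv A = (THE X. A ** X ** A = A \<and> X ** A ** X = X \<and>
                    transpose (A ** X) = A ** X \<and> transpose (X ** A) = X ** A)"

definition proj :: "real^'n^'m \<Rightarrow> real^'m^'m" where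
  "proj A = A ** pinv (transpose A ** A) ** transpose A"

end

theory Submission
  imports Defs
begin

lemma sym_dot:
  fixes M :: "real^'n^'n"
  assumes "sym_mat M"
  shows "x \<bullet> (M *v y) = (M *v x) \<bullet> y"
proof -
  have "x \<bullet> (M *v y) = (x v* M) \<bullet> y" by (simp add: dot_lmul_matrix)
  also have "x v* M = transpose M *v x" by simp
  also have "transpose M = M" using assms by (simp add: sym_mat_def)
  finally show ?thesis .
qed

lemma quad_max_bound:
  fixes M :: "real^'n^'n"
  assumes V: "subspace V" and v: "v \<in> V" "norm v = 1"
    and mx: "\<forall>y\<in>V \<inter> sphere 0 1. y \<bullet> (M *v y) \<le> v \<bullet> (M *v v)"
    and y: "y \<in> V"
  shows "y \<bullet> (M *v y) \<le> (v \<bullet> (M *v v)) * (y \<bullet> y)"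
proof (cases "y = 0")
  case True then show ?thesis by simp
next
  case False
  define r where "r = norm y"
  have rpos: "r > 0" using False r_def by simp
  define z where "z = inverse r *\<^sub>R y"
  have zV: "z \<in> V" using V y unfolding z_def by (simp add: subspace_scale)
  have "norm z = 1" using rpos unfolding z_def r_def by simp
  hence "z \<in> V \<inter> sphere 0 1" using zV by simp
  with mx have le: "z \<bullet> (M *v z) \<le> v \<bullet> (M *v v)" by (rule bspec)
  have q: "z \<bullet> (M *v z) = inverse r * inverse r * (y \<bullet> (M *v y))"
    unfolding z_def by (simp add: matrix_vector_mult_scaleR)
  have yy: "y \<bullet> y = r * r" unfolding r_def by (simp add: dot_square_norm power2_eq_square)
  have "y \<bullet> (M *v y) = (r * r) * (inverse r * inverse r * (y \<bullet> (M *v y)))"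
    using rpos by (simp add: field_simps)
  also have "\<dots> \<le> (r * r) * (v \<bullet> (M *v v))"
    using le q rpos by (intro mult_left_mono) auto
  finally show ?thesis using yy by (simp add: mult.commute)
qed

lemma eigen_exists:
  fixes M :: "real^'n^'n"
  assumes sym: "sym_mat M" and V: "subspace V" and inv: "\<forall>x\<in>V. M *v x \<in> V"
    and ne: "V \<noteq> {0}"
  shows "\<exists>v\<in>V. norm v = 1 \<and> M *v v = (v \<bullet> (M *v v)) *\<^sub>R v"
proof -
  let ?K = "V \<inter> sphere (0::real^'n) 1"
  have cK: "compact ?K" using closed_subspace[OF V] by (intro closed_Int_compact) auto
  obtain x where x: "x \<in> V" "x \<noteq> 0" using ne V subspace_0 by blast
  have "(1 / norm x) *\<^sub>R x \<in> ?K" using x V by (simp add: subspace_scale)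
  hence neK: "?K \<noteq> {}" by blast
  have ct: "continuous_on ?K (\<lambda>y. y \<bullet> (M *v y))"
    by (intro continuous_intros linear_continuous_on matrix_vector_mul_linear)
  obtain v where v: "v \<in> ?K" and mx: "\<forall>y\<in>?K. y \<bullet> (M *v y) \<le> v \<bullet> (M *v v)"
    using continuous_attains_sup[OF cK neK ct] by blast
  have vV: "v \<in> V" and nv: "norm v = 1" using v by auto
  have vv: "v \<bullet> v = 1" using nv by (simp add: dot_square_norm)
  define l where "l = v \<bullet> (M *v v)"
  define w where "w = M *v v - l *\<^sub>R v"
  have wV: "w \<in> V" unfolding w_def using inv vV V by (simp add: subspace_diff subspace_scale)
  have wv: "w \<bullet> v = 0" unfolding w_def l_def using vv
    by (simp add: inner_diff_right inner_commute)
  have wMv: "w \<bullet> (M *v v) = w \<bullet> w"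
  proof -
    have "M *v v = w + l *\<^sub>R v" unfolding w_def by simp
    hence "w \<bullet> (M *v v) = w \<bullet> w + l * (w \<bullet> v)" by (simp add: inner_add_right)
    with wv show ?thesis by simp
  qed
  have vMw: "v \<bullet> (M *v w) = w \<bullet> w" using sym_dot[OF sym, of v w] wMv by (simp add: inner_commute)
  define a where "a = w \<bullet> w"
  define c where "c = w \<bullet> (M *v w)"
  have ineq: "2 * t * a \<le> t * t * (l * a - c)" for t
  proof -
    have inV: "(v + t *\<^sub>R w) \<in> V" using vV wV V by (simp add: subspace_add subspace_scale)
    from quad_max_bound[OF V vV nv mx inV]
    have le: "(v + t *\<^sub>R w) \<bullet> (M *v (v + t *\<^sub>R w)) \<le> l * ((v + t *\<^sub>R w) \<bullet> (v + t *\<^sub>R w))"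
      by (simp add: l_def)
    have e1: "(v + t *\<^sub>R w) \<bullet> (M *v (v + t *\<^sub>R w)) = l + 2 * t * a + t * t * c"
      using vMw wMv unfolding l_def a_def c_def
      by (simp add: matrix_vector_right_distrib matrix_vector_mult_scaleR inner_add_left inner_add_right algebra_simps)
    have e2: "(v + t *\<^sub>R w) \<bullet> (v + t *\<^sub>R w) = 1 + t * t * a"
      using vv wv unfolding a_def by (simp add: inner_add_left inner_add_right inner_commute algebra_simps)
    have "l + 2 * t * a + t * t * c \<le> l * (1 + t * t * a)" using le unfolding e1 e2 .
    thus ?thesis by (simp add: algebra_simps)
  qed
  have "a = 0"
  proof (rule ccontr)
    assume "a \<noteq> 0"
    hence apos: "a > 0" unfolding a_def by simp
    define C where "C = l * a - c"
    define t where "t = a / (\<bar>C\<bar> + 1)"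
    have tpos: "t > 0" unfolding t_def using apos by simp
    have "2 * t * a \<le> t * t * C" using ineq[of t] by (simp add: C_def)
    hence "2 * a \<le> t * C" using tpos by (simp add: mult.assoc)
    also have "t * C \<le> t * \<bar>C\<bar>" using tpos by (simp add: mult_left_mono)
    also have "t * \<bar>C\<bar> < a" unfolding t_def using apos
      by (simp add: field_simps)
    finally show False using apos by simp
  qed
  hence "w = 0" unfolding a_def by simp
  hence "M *v v = l *\<^sub>R v" unfolding w_def by simp
  thus ?thesis using vV nv l_def by blast
qed


lemma spectral_sub:
  fixes M :: "real^'n^'n"
  assumes sym: "sym_mat M"
  shows "subspace V \<Longrightarrow> (\<forall>x\<in>V. M *v x \<in> V) \<Longrightarrow>
    \<exists>B. finite B \<and> B \<subseteq> V \<and> (\<forall>b\<in>B. norm b = 1) \<and> pairwise orthogonal B \<and> span B = V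
      \<and> (\<forall>b\<in>B. M *v b = (b \<bullet> (M *v b)) *\<^sub>R b)"
proof (induction "dim V" arbitrary: V rule: less_induct)
  case less
  show ?case
  proof (cases "V = {0}")
    case True
    then show ?thesis by (intro exI[of _ "{}"]) auto
  next
    case False
    obtain v where vV: "v \<in> V" and nv: "norm v = 1" and ev: "M *v v = (v \<bullet> (M *v v)) *\<^sub>R v"
      using eigen_exists[OF sym less.prems False] by blast
    have vv: "v \<bullet> v = 1" using nv by (simp add: dot_square_norm)
    define V' where "V' = {x\<in>V. v \<bullet> x = 0}"
    have sV': "subspace V'" using less.prems(1) unfolding V'_def subspace_def
      by (auto simp: inner_add_right)
    have iV': "\<forall>x\<in>V'. M *v x \<in> V'"
    proof
      fix x assume x: "x \<in> V'"
      have "v \<bullet> (M *v x) = (M *v v) \<bullet> x" using sym_dot[OF sym] .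
      also have "\<dots> = 0" using x ev unfolding V'_def by (metis (mono_tags, lifting) inner_scaleR_left mem_Collect_eq mult_zero_right)
      finally show "M *v x \<in> V'" using x less.prems(2) unfolding V'_def by auto
    qed
    have "v \<notin> V'" using vv unfolding V'_def by auto
    hence psub: "V' \<subset> V" using vV unfolding V'_def by blast
    have "dim V' < dim V"
    proof -
      have e: "span V' = V'" "span V = V" using sV' less.prems(1) by (simp_all add: span_eq_iff)
      show ?thesis using dim_psubset[of V' V] psub e by metis
    qed
    from less.hyps[OF this sV' iV'] obtain B' where B':
      "finite B'" "B' \<subseteq> V'" "\<forall>b\<in>B'. norm b = 1" "pairwise orthogonal B'" "span B' = V'"
      "\<forall>b\<in>B'. M *v b = (b \<bullet> (M *v b)) *\<^sub>R b" by blast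
    define B where "B = insert v B'"
    have orth: "\<forall>b\<in>B'. orthogonal v b \<and> orthogonal b v"
      using B'(2) unfolding V'_def orthogonal_def by (auto simp: inner_commute)
    have "span B = V"
    proof
      show "span B \<subseteq> V" using B'(2) vV less.prems(1) unfolding B_def V'_def
        by (intro span_minimal) auto
      show "V \<subseteq> span B"
      proof
        fix x assume x: "x \<in> V"
        have "x - (v \<bullet> x) *\<^sub>R v \<in> V'" using x vV vv less.prems(1) unfolding V'_def
          by (auto simp: subspace_diff subspace_scale inner_diff_right)
        thus "x \<in> span B" unfolding B_def span_breakdown_eq B'(5) by blast
      qed
    qed
    moreover have "pairwise orthogonal B" unfolding B_def using B'(4) orth
      by (simp add: pairwise_insert)
    ultimately show ?thesis using B' vV nv ev psub unfolding B_def
      by (intro exI[of _ "insert v B'"]) auto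
  qed
qed

lemma spectral:
  fixes M :: "real^'n^'n"
  assumes sym: "sym_mat M"
  shows "\<exists>B. finite B \<and> (\<forall>b\<in>B. norm b = 1) \<and> pairwise orthogonal B \<and> span B = UNIV
      \<and> (\<forall>b\<in>B. M *v b = (b \<bullet> (M *v b)) *\<^sub>R b)"
  using spectral_sub[OF sym, of UNIV] by auto


definition fcm :: "(real^'n) set \<Rightarrow> (real^'n \<Rightarrow> real) \<Rightarrow> real^'n^'n" where
  "fcm B w = (\<chi> i j. \<Sum>b\<in>B. w b * b$i * b$j)"

lemma fcm_mult_vec: "fcm B w *v x = (\<Sum>b\<in>B. (w b * (b \<bullet> x)) *\<^sub>R b)"
proof -
  have "(fcm B w *v x) $ i = (\<Sum>b\<in>B. (w b * (b \<bullet> x)) *\<^sub>R b) $ i" for i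
  proof -
    have "(fcm B w *v x) $ i = (\<Sum>j\<in>UNIV. (\<Sum>b\<in>B. w b * b$i * b$j) * x$j)"
      by (simp add: fcm_def matrix_vector_mult_def)
    also have "\<dots> = (\<Sum>j\<in>UNIV. \<Sum>b\<in>B. w b * b$i * (b$j * x$j))"
      by (simp add: sum_distrib_right mult.assoc)
    also have "\<dots> = (\<Sum>b\<in>B. \<Sum>j\<in>UNIV. w b * b$i * (b$j * x$j))"
      by (rule sum.swap)
    also have "\<dots> = (\<Sum>b\<in>B. w b * b$i * (b \<bullet> x))"
      by (simp add: inner_vec_def sum_distrib_left)
    also have "\<dots> = (\<Sum>b\<in>B. (w b * (b \<bullet> x)) *\<^sub>R b) $ i"
      by (simp add: sum_component mult_ac)
    finally show ?thesis .
  qed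
  thus ?thesis by (simp add: vec_eq_iff)
qed

lemma fcm_on_basis:
  assumes fin: "finite B" and n: "\<forall>b\<in>B. norm b = 1" and o: "pairwise orthogonal B" and c: "c \<in> B"
  shows "fcm B w *v c = w c *\<^sub>R c"
proof -
  have "fcm B w *v c = (w c * (c \<bullet> c)) *\<^sub>R c + (\<Sum>b\<in>B-{c}. (w b * (b \<bullet> c)) *\<^sub>R b)"
    unfolding fcm_mult_vec using fin c by (simp add: sum.remove)
  also have "(\<Sum>b\<in>B-{c}. (w b * (b \<bullet> c)) *\<^sub>R b) = 0"
    using o c by (intro sum.neutral) (auto simp: pairwise_def orthogonal_def)
  also have "c \<bullet> c = 1" using n c by (simp add: dot_square_norm)
  finally show ?thesis by simp
qed

lemma fcm_cong: "(\<And>b. b \<in> B \<Longrightarrow> w b = u b) \<Longrightarrow> fcm B w = fcm B u"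
  unfolding fcm_def by (simp add: vec_eq_iff)

lemma fcm_sym: "sym_mat (fcm B w)"
  unfolding sym_mat_def fcm_def transpose_def by (simp add: vec_eq_iff mult_ac)

lemma mat_eq_on_span:
  fixes P Q :: "real^'n^'n"
  assumes sp: "span B = UNIV" and eq: "\<forall>b\<in>B. P *v b = Q *v b"
  shows "P = Q"
proof -
  have "P *v x = Q *v x" for x
    by (rule linear_eq_on_span[where B=B, OF matrix_vector_mul_linear matrix_vector_mul_linear])
       (use eq sp in auto)
  thus ?thesis by (simp add: matrix_eq)
qed

locale eigbasis =
  fixes B :: "(real^'n) set"
  assumes fin: "finite B" and nrm: "\<forall>b\<in>B. norm b = 1" and orth: "pairwise orthogonal B"
    and sp: "span B = UNIV"
begin

lemma onb: "c \<in> B \<Longrightarrow> fcm B w *v c = w c *\<^sub>R c"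
  using fcm_on_basis[OF fin nrm orth] .

lemma fcm_mult: "fcm B w ** fcm B u = fcm B (\<lambda>b. w b * u b)"
  by (rule mat_eq_on_span[OF sp])
     (simp add: onb matrix_vector_mul_assoc[symmetric] matrix_vector_mult_scaleR)

lemma fcm_eq: "(\<forall>b\<in>B. M *v b = w b *\<^sub>R b) \<Longrightarrow> M = fcm B w"
  by (rule mat_eq_on_span[OF sp]) (simp add: onb)

lemma fcm_spd:
  assumes pos: "\<forall>b\<in>B. w b > 0"
  shows "spd (fcm B w)"
  unfolding spd_def
proof (intro conjI allI impI)
  show "sym_mat (fcm B w)" by (rule fcm_sym)
  fix x :: "real^'n" assume x: "x \<noteq> 0"
  have q: "x \<bullet> (fcm B w *v x) = (\<Sum>b\<in>B. w b * (b \<bullet> x) * (b \<bullet> x))"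
    unfolding fcm_mult_vec by (simp add: inner_sum_right mult_ac inner_commute)
  have ge: "\<forall>b\<in>B. 0 \<le> w b * (b \<bullet> x) * (b \<bullet> x)"
  proof
    fix b assume "b \<in> B"
    hence "0 \<le> w b" using pos by (simp add: less_imp_le)
    moreover have "0 \<le> (b \<bullet> x) * (b \<bullet> x)" by simp
    ultimately show "0 \<le> w b * (b \<bullet> x) * (b \<bullet> x)" by (metis mult.assoc mult_nonneg_nonneg)
  qed
  have "\<exists>b\<in>B. b \<bullet> x \<noteq> 0"
  proof (rule ccontr)
    assume "\<not> ?thesis"
    hence "\<And>b. b \<in> B \<Longrightarrow> orthogonal x b" by (simp add: orthogonal_def inner_commute)
    hence "orthogonal x x" using orthogonal_to_span[of x B x] sp by auto
    thus False using x by (simp add: orthogonal_def)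
  qed
  then obtain c where c: "c \<in> B" "c \<bullet> x \<noteq> 0" by blast
  have "0 < w c" using pos c by simp
  moreover have "0 < (c \<bullet> x) * (c \<bullet> x)" using c(2) by (auto simp: zero_less_mult_iff linorder_neq_iff)
  ultimately have "0 < w c * (c \<bullet> x) * (c \<bullet> x)" by (metis mult.assoc mult_pos_pos)
  also have "\<dots> \<le> (\<Sum>b\<in>B. w b * (b \<bullet> x) * (b \<bullet> x))"
    using ge c fin by (intro member_le_sum) auto
  finally show "x \<bullet> (fcm B w *v x) > 0" using q by simp
qed

end


lemma spd_sym: "spd M \<Longrightarrow> sym_mat M" by (simp add: spd_def)

lemma sqrt_exists:
  fixes M :: "real^'n^'n"
  assumes "spd M"
  shows "\<exists>S. spd S \<and> S ** S = M"
proof -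
  obtain B where B: "finite B" "\<forall>b\<in>B. norm b = 1" "pairwise orthogonal B" "span B = UNIV"
      "\<forall>b\<in>B. M *v b = (b \<bullet> (M *v b)) *\<^sub>R b"
    using spectral[OF spd_sym[OF assms]] by blast
  interpret eigbasis B using B by unfold_locales auto
  define mu where "mu b = b \<bullet> (M *v b)" for b
  have pos: "\<forall>b\<in>B. mu b > 0"
  proof
    fix b assume "b \<in> B"
    hence "b \<noteq> 0" using B(2) by auto
    thus "mu b > 0" using assms unfolding spd_def mu_def by blast
  qed
  have M: "M = fcm B mu" using B(5) by (intro fcm_eq) (simp add: mu_def)
  define S where "S = fcm B (\<lambda>b. sqrt (mu b))"
  have "spd S" unfolding S_def using pos by (intro fcm_spd) auto
  moreover have "S ** S = M" unfolding S_def fcm_mult M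
    by (rule fcm_cong) (use pos in \<open>auto simp: less_imp_le\<close>)
  ultimately show ?thesis by blast
qed


lemma sym_diff: "sym_mat S \<Longrightarrow> sym_mat T \<Longrightarrow> sym_mat (S - T)"
  unfolding sym_mat_def transpose_def by (simp add: vec_eq_iff)

lemma sqrt_unique:
  fixes S T :: "real^'n^'n"
  assumes S: "spd S" and T: "spd T" and eq: "S ** S = T ** T"
  shows "S = T"
proof -
  define D where "D = S - T"
  have symD: "sym_mat D" unfolding D_def using S T by (intro sym_diff spd_sym)
  obtain B where B: "finite B" "\<forall>b\<in>B. norm b = 1" "pairwise orthogonal B" "span B = UNIV"
      "\<forall>b\<in>B. D *v b = (b \<bullet> (D *v b)) *\<^sub>R b"
    using spectral[OF symD] by blast
  have "D *v b = 0 *v b" if b: "b \<in> B" for b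
  proof -
    define d where "d = b \<bullet> (D *v b)"
    have Db: "D *v b = d *\<^sub>R b" using B(5) b d_def by auto
    have bnz: "b \<noteq> 0" using B(2) b by auto
    have "S *v (S *v b) = T *v (T *v b)" using eq by (simp add: matrix_vector_mul_assoc)
    hence "S *v (D *v b) + D *v (T *v b) = 0" unfolding D_def
      by (simp add: matrix_vector_mult_diff_rdistrib matrix_vector_mult_diff_distrib)
    hence "b \<bullet> (S *v (D *v b)) + b \<bullet> (D *v (T *v b)) = 0"
      by (metis inner_add_right inner_zero_right)
    moreover have "b \<bullet> (D *v (T *v b)) = d * (b \<bullet> (T *v b))"
      using sym_dot[OF symD, of b "T *v b"] Db by simp
    moreover have "b \<bullet> (S *v (D *v b)) = d * (b \<bullet> (S *v b))"
      using Db by (simp add: matrix_vector_mult_scaleR)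
    ultimately have "d * (b \<bullet> (S *v b) + b \<bullet> (T *v b)) = 0" by (simp add: algebra_simps)
    moreover have "b \<bullet> (S *v b) + b \<bullet> (T *v b) > 0"
      using S T bnz unfolding spd_def by (simp add: add_pos_pos)
    ultimately have "d = 0" by simp
    thus ?thesis using Db by simp
  qed
  hence "D = 0" using mat_eq_on_span[OF B(4)] by blast
  thus ?thesis unfolding D_def by simp
qed

lemma mat_sqrt:
  fixes M :: "real^'n^'n"
  assumes "spd M"
  shows "spd (mat_sqrt M) \<and> mat_sqrt M ** mat_sqrt M = M"
proof -
  obtain S where S: "spd S \<and> S ** S = M" using sqrt_exists[OF assms] by blast
  have "\<exists>!S. spd S \<and> S ** S = M"
    using S sqrt_unique by (intro ex1I[of _ S]) auto
  thus ?thesis unfolding mat_sqrt_def by (rule theI')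
qed

lemma spd_invertible:
  fixes M :: "real^'n^'n"
  assumes "spd M"
  shows "invertible M"
proof -
  have "\<forall>x. M *v x = 0 \<longrightarrow> x = 0"
  proof (intro allI impI)
    fix x assume "M *v x = 0"
    hence "x \<bullet> (M *v x) = 0" by simp
    thus "x = 0" using assms unfolding spd_def by (metis less_irrefl)
  qed
  hence "\<exists>B. B ** M = mat 1" using matrix_left_invertible_ker by blast
  thus ?thesis using invertible_left_inverse by blast
qed

lemma matrix_inv_props:
  fixes M :: "real^'n^'n"
  assumes "invertible M"
  shows "M ** matrix_inv M = mat 1 \<and> matrix_inv M ** M = mat 1"
  using assms unfolding invertible_def matrix_inv_def by (rule someI_ex)

lemma invertible_matrix_inv:
  fixes M :: "real^'n^'n"
  assumes "invertible M"
  shows "invertible (matrix_inv M)"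
  using matrix_inv_props[OF assms] unfolding invertible_def by blast


definition penrose :: "real^'n^'m \<Rightarrow> real^'m^'n \<Rightarrow> bool" where
  "penrose A X \<longleftrightarrow> A ** X ** A = A \<and> X ** A ** X = X \<and>
                    transpose (A ** X) = A ** X \<and> transpose (X ** A) = X ** A"

lemma penrose_unique:
  assumes X: "penrose A X" and Y: "penrose A Y"
  shows "X = Y"
proof -
  have x1: "A ** X ** A = A" and x2: "X ** A ** X = X" and x3: "transpose (A ** X) = A ** X"
    and x4: "transpose (X ** A) = X ** A" using X unfolding penrose_def by auto
  have y1: "A ** Y ** A = A" and y2: "Y ** A ** Y = Y" and y3: "transpose (A ** Y) = A ** Y"
    and y4: "transpose (Y ** A) = Y ** A" using Y unfolding penrose_def by auto
  have tA1: "transpose A = transpose A ** (A ** Y)"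
  proof -
    have "transpose A = transpose (A ** Y ** A)" using y1 by simp
    also have "\<dots> = transpose A ** transpose (A ** Y)" by (simp add: matrix_transpose_mul)
    finally show ?thesis using y3 by simp
  qed
  have tA2: "transpose A = (X ** A) ** transpose A"
  proof -
    have "transpose A = transpose (A ** X ** A)" using x1 by simp
    also have "\<dots> = transpose (X ** A) ** transpose A" by (simp add: matrix_transpose_mul matrix_mul_assoc)
    finally show ?thesis using x4 by simp
  qed
  have "X = X ** (A ** X)" using x2 by (simp add: matrix_mul_assoc)
  also have "\<dots> = X ** transpose (A ** X)" using x3 by simp
  also have "\<dots> = X ** transpose X ** transpose A" by (simp add: matrix_transpose_mul matrix_mul_assoc)
  also have "\<dots> = X ** transpose X ** (transpose A ** (A ** Y))" using tA1 by simp
  also have "\<dots> = X ** (transpose X ** transpose A) ** (A ** Y)" by (simp add: matrix_mul_assoc)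
  also have "\<dots> = X ** (A ** X) ** (A ** Y)" using x3 by (simp add: matrix_transpose_mul)
  also have "\<dots> = (X ** A ** X) ** A ** Y" by (simp add: matrix_mul_assoc)
  also have "\<dots> = X ** A ** Y" using x2 by simp
  finally have XY: "X = X ** A ** Y" .
  have "Y = (Y ** A) ** Y" using y2 by simp
  also have "\<dots> = transpose (Y ** A) ** Y" using y4 by simp
  also have "\<dots> = transpose A ** transpose Y ** Y" by (simp add: matrix_transpose_mul)
  also have "\<dots> = (X ** A) ** transpose A ** transpose Y ** Y" using tA2 by simp
  also have "\<dots> = (X ** A) ** (transpose A ** transpose Y) ** Y" by (simp add: matrix_mul_assoc)
  also have "\<dots> = (X ** A) ** (Y ** A) ** Y" using y4 by (simp add: matrix_transpose_mul)
  also have "\<dots> = X ** A ** (Y ** A ** Y)" by (simp add: matrix_mul_assoc)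
  also have "\<dots> = X ** A ** Y" using y2 by simp
  finally show ?thesis using XY by simp
qed

lemma pinv_sym:
  fixes M :: "real^'n^'n"
  assumes sym: "sym_mat M"
  shows "penrose M (pinv M) \<and> transpose (pinv M) = pinv M"
proof -
  obtain B where B: "finite B" "\<forall>b\<in>B. norm b = 1" "pairwise orthogonal B" "span B = UNIV"
      "\<forall>b\<in>B. M *v b = (b \<bullet> (M *v b)) *\<^sub>R b"
    using spectral[OF sym] by blast
  interpret eigbasis B using B by unfold_locales auto
  define mu where "mu b = b \<bullet> (M *v b)" for b
  have M: "M = fcm B mu" using B(5) by (intro fcm_eq) (simp add: mu_def)
  define X where "X = fcm B (\<lambda>b. inverse (mu b))"
  have e1: "M ** X ** M = M" unfolding M X_def fcm_mult
    by (rule fcm_cong) (metis mult_zero_left mult_zero_right right_inverse mult_1_left)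
  have e2: "X ** M ** X = X" unfolding M X_def fcm_mult
    by (rule fcm_cong) (metis mult_zero_left mult_zero_right left_inverse mult_1_left inverse_zero)
  have e3: "transpose (M ** X) = M ** X" unfolding M X_def fcm_mult
    using fcm_sym unfolding sym_mat_def by blast
  have e4: "transpose (X ** M) = X ** M" unfolding M X_def fcm_mult
    using fcm_sym unfolding sym_mat_def by blast
  have p: "penrose M X" unfolding penrose_def using e1 e2 e3 e4 by blast
  have "pinv M = X" unfolding pinv_def
  proof (rule the_equality)
    show "M ** X ** M = M \<and> X ** M ** X = X \<and> transpose (M ** X) = M ** X \<and> transpose (X ** M) = X ** M"
      using e1 e2 e3 e4 by blast
    fix Y assume "M ** Y ** M = M \<and> Y ** M ** Y = Y \<and> transpose (M ** Y) = M ** Y \<and> transpose (Y ** M) = Y ** M"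
    hence "penrose M Y" unfolding penrose_def .
    thus "Y = X" using penrose_unique[OF _ p] by blast
  qed
  moreover have "transpose X = X" unfolding X_def using fcm_sym sym_mat_def by metis
  ultimately show ?thesis using p by simp
qed


lemma gram_sym: "sym_mat (transpose A ** (A::real^'n^'m))"
  unfolding sym_mat_def by (simp add: matrix_transpose_mul)

lemma gram_zero:
  fixes A :: "real^'n^'m"
  assumes "transpose A *v (A *v z) = 0"
  shows "A *v z = 0"
proof -
  have "(A *v z) \<bullet> (A *v z) = (z v* transpose A) \<bullet> (A *v z)" by simp
  also have "\<dots> = z \<bullet> (transpose A *v (A *v z))" by (rule dot_lmul_matrix)
  also have "\<dots> = 0" using assms by simp
  finally show ?thesis by simp
qed

lemma proj_A:
  fixes A :: "real^'n^'m"
  shows "proj A ** A = A" and "transpose A ** proj A = transpose A"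
proof -
  define M where "M = transpose A ** A"
  define X where "X = pinv M"
  have P: "penrose M X" and Xt: "transpose X = X"
    using pinv_sym[OF gram_sym[of A]] unfolding M_def X_def by auto
  have MXM: "M ** X ** M = M" using P unfolding penrose_def by blast
  have Mt: "transpose M = M" unfolding M_def by (simp add: matrix_transpose_mul)
  have AXM: "A ** X ** M = A"
  proof -
    have "(A ** X ** M) *v x = A *v x" for x
    proof -
      define z where "z = (X ** M) *v x - x"
      have "M *v z = 0" unfolding z_def
        using MXM by (simp add: matrix_vector_mult_diff_distrib matrix_vector_mul_assoc matrix_mul_assoc)
      hence "transpose A *v (A *v z) = 0" unfolding M_def by (simp add: matrix_vector_mul_assoc)
      hence "A *v z = 0" by (rule gram_zero)
      thus ?thesis unfolding z_def
        by (simp add: matrix_vector_mult_diff_distrib matrix_vector_mul_assoc matrix_mul_assoc)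
    qed
    thus ?thesis by (simp add: matrix_eq)
  qed
  show "proj A ** A = A"
    using AXM unfolding proj_def M_def[symmetric] X_def[symmetric] by (simp add: matrix_mul_assoc M_def)
  have "transpose A = transpose (A ** X ** M)" using AXM by simp
  also have "\<dots> = M ** X ** transpose A" using Xt Mt by (simp add: matrix_transpose_mul matrix_mul_assoc)
  finally show "transpose A ** proj A = transpose A"
    unfolding proj_def M_def[symmetric] X_def[symmetric] by (simp add: matrix_mul_assoc M_def)
qed

lemma transpose_zero: "transpose (0::real^'n^'m) = 0"
  unfolding transpose_def by (simp add: vec_eq_iff)

lemma proj_sum:
  fixes A :: "real^'a^'e" and B :: "real^'b^'e"
  assumes orth: "transpose A ** B = 0"
    and compl: "\<forall>q. transpose A *v q = 0 \<longrightarrow> (\<exists>t. q = B *v t)"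
  shows "proj A + proj B = mat 1"
proof -
  have BA: "transpose B ** A = 0"
    using arg_cong[OF orth, of transpose] by (simp add: matrix_transpose_mul transpose_zero)
  have "(proj A + proj B) *v x = mat 1 *v x" for x
  proof -
    define q where "q = x - proj A *v x"
    have "transpose A *v q = 0" unfolding q_def
      using proj_A(2)[of A] by (simp add: matrix_vector_mult_diff_distrib matrix_vector_mul_assoc)
    then obtain t where t: "q = B *v t" using compl by blast
    define s where "s = (pinv (transpose A ** A) ** transpose A) *v x"
    have PAx: "proj A *v x = A *v s" unfolding s_def proj_def
      by (simp add: matrix_vector_mul_assoc matrix_mul_assoc)
    have "proj B ** A = 0"
      unfolding proj_def by (metis BA matrix_mul_assoc times0_right)
    hence "proj B *v (A *v s) = 0"
      by (metis matrix_vector_mul_assoc matrix_vector_mult_0)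
    moreover have "proj B *v (B *v t) = B *v t"
      using proj_A(1)[of B] by (simp add: matrix_vector_mul_assoc)
    moreover have "x = A *v s + B *v t" using PAx t q_def by (metis diff_add_cancel add.commute)
    ultimately have "proj B *v x = B *v t"
      by (metis add_0 matrix_vector_right_distrib)
    hence "(proj A + proj B) *v x = A *v s + B *v t"
      using PAx by (simp add: matrix_vector_mult_add_rdistrib)
    thus ?thesis using PAx t q_def by (metis diff_add_cancel add.commute matrix_vector_mul_lid)
  qed
  thus ?thesis by (simp add: matrix_eq)
qed


lemma main_gen:
  fixes Sigma :: "real^'s::finite^'e::finite" and Lambda :: "real^'l::finite^'e"
    and U V :: "real^'e^'e" and K :: "real^'l^'l" and T :: "real^'s^'s"
  assumes orth: "transpose Sigma ** Lambda = 0"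
    and rng: "\<forall>y. transpose Lambda *v y = 0 \<longrightarrow> (\<exists>s. y = Sigma *v s)"
    and UV: "transpose U ** V = mat 1"
    and K: "invertible K" and T: "invertible T"
  shows "proj (U ** Lambda ** K) + proj (V ** Sigma ** T) = mat 1"
proof (rule proj_sum)
  have LS: "transpose Lambda ** Sigma = 0"
    using arg_cong[OF orth, of transpose] by (simp add: matrix_transpose_mul transpose_zero)
  have "transpose (U ** Lambda ** K) ** (V ** Sigma ** T)
      = transpose K ** transpose Lambda ** (transpose U ** V) ** Sigma ** T"
    by (simp add: matrix_transpose_mul matrix_mul_assoc)
  also have "\<dots> = transpose K ** (transpose Lambda ** Sigma) ** T"
    using UV by (simp add: matrix_mul_assoc)
  also have "\<dots> = 0" using LS by simp
  finally show "transpose (U ** Lambda ** K) ** (V ** Sigma ** T) = 0" .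
  show "\<forall>q. transpose (U ** Lambda ** K) *v q = 0 \<longrightarrow> (\<exists>t. q = V ** Sigma ** T *v t)"
  proof (intro allI impI)
    fix q assume q: "transpose (U ** Lambda ** K) *v q = 0"
    have Kt: "invertible (transpose K)" using K by (simp add: transpose_invertible)
    have "transpose K *v (transpose Lambda *v (transpose U *v q)) = 0"
      using q by (simp only: matrix_transpose_mul matrix_vector_mul_assoc matrix_mul_assoc)
    hence "transpose Lambda *v (transpose U *v q) = 0"
      using inj_matrix_vector_mult[OF Kt] by (metis injD matrix_vector_mult_0_right)
    then obtain s where s: "transpose U *v q = Sigma *v s" using rng by blast
    have VU: "V ** transpose U = mat 1" using UV matrix_left_right_inverse by blast
    have "q = V *v (transpose U *v q)" by (simp only: matrix_vector_mul_assoc VU matrix_vector_mul_lid)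
    also have "\<dots> = V *v (Sigma *v s)" using s by simp
    also have "s = T *v (matrix_inv T *v s)"
      using matrix_inv_props[OF T] by (simp only: matrix_vector_mul_assoc matrix_vector_mul_lid)
    finally have "q = (V ** Sigma ** T) *v (matrix_inv T *v s)"
      by (simp only: matrix_vector_mul_assoc matrix_mul_assoc)
    thus "\<exists>t. q = V ** Sigma ** T *v t" by blast
  qed
qed

theorem mainTheorem7:
  fixes Sigma :: "real^'s::finite^'e::finite"   \<comment> \<open>Star-to-RWG, N x N_S\<close>
    and Lambda :: "real^'l::finite^'e"            \<comment> \<open>Loop-to-RWG, N x N_L\<close>
    and G Gd :: "real^'e^'e"                      \<comment> \<open>RWG Gram G and dual (BC) Gram\<close>
    and Gp Gdlam :: "real^'s^'s"                  \<comment> \<open>G_p and dual-pyramid Gram (one per triangle)\<close>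
    and Glam Gdp :: "real^'l^'l"                  \<comment> \<open>G_lambda and dual-patch Gram (one per vertex)\<close>
  assumes Sigma_entries: "\<forall>m n. Sigma $ m $ n \<in> {-1, 0, 1}"
      and Sigma_rows: "\<forall>m. (\<exists>!n. Sigma $ m $ n = 1) \<and> (\<exists>!n. Sigma $ m $ n = -1)"
      and Lambda_entries: "\<forall>m n. Lambda $ m $ n \<in> {-1, 0, 1}"
      and Lambda_rows: "\<forall>m. (\<exists>!n. Lambda $ m $ n = 1) \<and> (\<exists>!n. Lambda $ m $ n = -1)"
      and orth: "transpose Sigma ** Lambda = 0"
      and span: "\<forall>v. \<exists>s l. v = Sigma *v s + Lambda *v l"
      and spd_G: "spd G" and spd_Gd: "spd Gd"
      and spd_Gp: "spd Gp" and spd_Gdlam: "spd Gdlam"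
      and spd_Glam: "spd Glam" and spd_Gdp: "spd Gdp"
  shows "proj (mat_sqrt G ** Lambda ** mat_inv_sqrt Glam)
           + proj (mat_inv_sqrt G ** Sigma ** mat_sqrt Gp) = mat 1
       \<and> proj (mat_inv_sqrt Gd ** Lambda ** mat_sqrt Gdp)
           + proj (mat_sqrt Gd ** Sigma ** mat_inv_sqrt Gdlam) = mat 1"
proof -
  have LS: "transpose Lambda ** Sigma = 0"
    using arg_cong[OF orth, of transpose] by (simp add: matrix_transpose_mul transpose_zero)
  have rng: "\<forall>y. transpose Lambda *v y = 0 \<longrightarrow> (\<exists>s. y = Sigma *v s)"
  proof (intro allI impI)
    fix y assume y: "transpose Lambda *v y = 0"
    obtain s l where sl: "y = Sigma *v s + Lambda *v l" using span by blast
    have "transpose Lambda *v (Sigma *v s) = 0"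
      using LS by (metis matrix_vector_mul_assoc matrix_vector_mult_0)
    hence "transpose Lambda *v (Lambda *v l) = 0" using y sl
      by (simp only: matrix_vector_right_distrib) simp
    hence "Lambda *v l = 0" by (rule gram_zero)
    thus "\<exists>s. y = Sigma *v s" using sl by auto
  qed
  have inv_sqrt: "invertible (mat_sqrt M)" "invertible (mat_inv_sqrt M)"
    "sym_mat (mat_sqrt M)" if "spd M" for M :: "real^'n^'n"
  proof -
    have sp: "spd (mat_sqrt M)" using mat_sqrt[OF that] by blast
    show i: "invertible (mat_sqrt M)" by (rule spd_invertible[OF sp])
    show "invertible (mat_inv_sqrt M)" unfolding mat_inv_sqrt_def by (rule invertible_matrix_inv[OF i])
    show "sym_mat (mat_sqrt M)" using sp by (rule spd_sym)
  qed
  have 1: "proj (mat_sqrt G ** Lambda ** mat_inv_sqrt Glam)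
           + proj (mat_inv_sqrt G ** Sigma ** mat_sqrt Gp) = mat 1"
  proof (rule main_gen[OF orth rng])
    show "transpose (mat_sqrt G) ** mat_inv_sqrt G = mat 1"
      using inv_sqrt[OF spd_G] matrix_inv_props unfolding sym_mat_def mat_inv_sqrt_def by metis
  qed (use inv_sqrt spd_Glam spd_Gp in auto)
  have 2: "proj (mat_inv_sqrt Gd ** Lambda ** mat_sqrt Gdp)
           + proj (mat_sqrt Gd ** Sigma ** mat_inv_sqrt Gdlam) = mat 1"
  proof (rule main_gen[OF orth rng])
    have S: "transpose (mat_sqrt Gd) = mat_sqrt Gd" "invertible (mat_sqrt Gd)"
      using inv_sqrt[OF spd_Gd] unfolding sym_mat_def by auto
    have "transpose (mat_inv_sqrt Gd) ** mat_sqrt Gd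
        = transpose (transpose (mat_sqrt Gd) ** mat_inv_sqrt Gd)"
      by (simp add: matrix_transpose_mul)
    also have "\<dots> = mat 1" unfolding S(1) mat_inv_sqrt_def
      using matrix_inv_props[OF S(2)] by simp
    finally show "transpose (mat_inv_sqrt Gd) ** mat_sqrt Gd = mat 1" .
  qed (use inv_sqrt spd_Gdp spd_Gdlam in auto)
  show ?thesis using 1 2 by blast
qed

end
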